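(* Let $i\in\mathbb{N}_0$ and let $\alpha,\beta\in\mathbb{C}$. Then $$F^{1:1;2}_{1:0;1}\left[\begin{matrix}\alpha: & \tfrac12\beta+2+i\,; & \tfrac12\beta-2-i,\ \tfrac12\alpha+1\,;\\ \beta: & -\,; & \tfrac12\alpha\,;\end{matrix}\ \tfrac12,\ \tfrac12\right] =\frac{(-1)^i\,2^{\alpha+3+i}}{\beta\,(i+1)!}\sum_{r=0}^{i}(-1)^r\binom{i}{r}\frac{\Gamma\!\left(\frac14\beta+\frac{r+1}{2}\right)}{\Gamma\!\left(\frac14\beta-i+\frac{r-1}{2}\right)}$$ and $$F^{1:1;2}_{1:0;1}\left[\begin{matrix}\alpha: & \tfrac12\beta+2-i\,; & \tfrac12\beta-2+i,\ \tfrac12\alpha+1\,;\\ \beta: & -\,; & \tfrac12\alpha\,;\end{matrix}\ \tfrac12,\ \tfrac12\right] =\frac{2^{\alpha+3-i}}{\beta}\sum_{r=0}^{i}\binom{i}{r}\frac{\Gamma\!\left(\frac14\beta+\frac{r+1}{2}\right)}{\Gamma\!\left(\frac14\beta+\frac{r-1}{2}\right)}.$$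
   Context: For $\lambda\in\mathbb{C}$ and $n\in\mathbb{N}_0$, $(\lambda)_0=1$ and $(\lambda)_n=\lambda(\lambda+1)\cdots(\lambda+n-1)$; $\Gamma$ is Euler's Gamma function and $\binom{i}{r}$ the binomial coefficient. The (generalized) Kampé de Fériet function is defined by $$F^{H:A;B}_{G:C;D}\left[\begin{matrix}(h_H): & (a_A)\,; & (b_B)\,;\\ (g_G): & (c_C)\,; & (d_D)\,;\end{matrix}\ x,\ y\right]=\sum_{m=0}^\infty\sum_{n=0}^\infty\frac{\prod_{j=1}^H(h_j)_{m+n}\prod_{j=1}^A(a_j)_m\prod_{j=1}^B(b_j)_n}{\prod_{j=1}^G(g_j)_{m+n}\prod_{j=1}^C(c_j)_m\prod_{j=1}^D(d_j)_n}\frac{x^m}{m!}\frac{y^n}{n!},$$ where a dash "$-$" denotes an empty list of parameters (empty products equal $1$). Parameters are tacitly assumed to be such that the double series converges, no denominator parameter is a non-positive integer, and all Gamma values appearing are finite. *)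

theory Defs
  imports "HOL-Analysis.Analysis"
begin

text \<open>Generalized Kampe de Feriet function with parameter lists
  (h_H), (a_A), (b_B) in the numerator and (g_G), (c_C), (d_D) in the denominator.\<close>
definition KdF ::
  "complex list \<Rightarrow> complex list \<Rightarrow> complex list \<Rightarrow>
   complex list \<Rightarrow> complex list \<Rightarrow> complex list \<Rightarrow> complex \<Rightarrow> complex \<Rightarrow> complex" where
  "KdF hs as bs gs cs ds x y =
     (\<Sum>\<^sub>\<infinity>(m, n)\<in>UNIV.
        (prod_list (map (\<lambda>p. pochhammer p (m + n)) hs)
         * prod_list (map (\<lambda>p. pochhammer p m) as)
         * prod_list (map (\<lambda>p. pochhammer p n) bs))
        / (prod_list (map (\<lambda>p. pochhammer p (m + n)) gs)
         * prod_list (map (\<lambda>p. pochhammer p m) cs)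
         * prod_list (map (\<lambda>p. pochhammer p n) ds))
        * (x ^ m / fact m) * (y ^ n / fact n))"

end

theory Submission
  imports Defs "HOL-Real_Asymp.Real_Asymp"
begin


definition SD :: "nat \<Rightarrow> nat \<Rightarrow> complex \<Rightarrow> complex" where
  "SD i n x = (\<Sum>r=0..i. (-1)^r * of_nat (i choose r) * pochhammer (x + of_nat r / 2) n)"

lemma SD_rec: "SD (Suc i) (Suc n) x = x * SD (Suc i) n (x+1) - (of_nat (Suc i)/2) * SD i n (x + 3/2)"
proof -
  define P where "P r = pochhammer (x + 1 + of_nat r / 2) n" for r :: nat
  have "SD (Suc i) (Suc n) x = (\<Sum>r=0..Suc i. (-1)^r * of_nat (Suc i choose r) * ((x + of_nat r / 2) * P r))"
    unfolding SD_def P_def by (intro sum.cong refl) (simp add: pochhammer_rec algebra_simps)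
  also have "\<dots> = x * (\<Sum>r=0..Suc i. (-1)^r * of_nat (Suc i choose r) * P r)
       + (1/2) * (\<Sum>r=0..Suc i. (-1)^r * of_nat (r * (Suc i choose r)) * P r)"
    unfolding sum_distrib_left sum.distrib[symmetric]
    by (intro sum.cong refl) (simp add: algebra_simps add_divide_distrib)
  also have "(\<Sum>r=0..Suc i. (-1)^r * of_nat (Suc i choose r) * P r) = SD (Suc i) n (x+1)"
    unfolding SD_def P_def by (simp add: algebra_simps)
  also have "(\<Sum>r=0..Suc i. (-1)^r * of_nat (r * (Suc i choose r)) * P r)
      = (\<Sum>r=0..i. (-1)^(Suc r) * of_nat (Suc r * (Suc i choose Suc r)) * P (Suc r))"
    by (subst sum.atLeast0_atMost_Suc_shift) (simp del: binomial_Suc_Suc of_nat_Suc of_nat_mult)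
  also have "\<dots> = - of_nat (Suc i) * (\<Sum>r=0..i. (-1)^r * of_nat (i choose r) * P (Suc r))"
    unfolding sum_distrib_left
  proof (intro sum.cong refl)
    fix r assume "r \<in> {0..i}"
    have "Suc r * (Suc i choose Suc r) = Suc i * (i choose r)"
      using Suc_times_binomial_eq[of i r] by (simp add: mult.commute)
    then show "(-1)^(Suc r) * of_nat (Suc r * (Suc i choose Suc r)) * P (Suc r)
       = - of_nat (Suc i) * ((-1)^r * of_nat (i choose r) * P (Suc r))"
      by (simp only:) (simp add: algebra_simps)
  qed
  also have "(\<Sum>r=0..i. (-1)^r * of_nat (i choose r) * P (Suc r)) = SD i n (x + 3/2)"
    unfolding SD_def P_def by (intro sum.cong refl) (simp add: algebra_simps add_divide_distrib)
  finally show ?thesis by (simp add: field_simps)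
qed

lemma SD_zero: "n < i \<Longrightarrow> SD i n x = 0"
proof (induction n arbitrary: i x)
  case 0
  then obtain j where i: "i = Suc j" by (cases i) auto
  have "(\<Sum>r=0..i. (-1)^r * of_nat (i choose r) :: complex) = 0"
    using choose_alternating_sum[of i, where 'a=complex] 0 by (simp add: atLeast0AtMost)
  then show ?case by (simp add: SD_def)
next
  case (Suc n)
  then obtain j where i: "i = Suc j" by (cases i) auto
  with Suc show ?case by (simp add: SD_rec)
qed

lemma SD_diag: "SD i i x = (-1)^i * fact i / 2^i"
proof (induction i arbitrary: x)
  case 0
  then show ?case by (simp add: SD_def)
next
  case (Suc i)
  have "SD (Suc i) (Suc i) x = x * SD (Suc i) i (x+1) - (of_nat (Suc i)/2) * SD i i (x + 3/2)"
    by (rule SD_rec)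
  also have "SD (Suc i) i (x+1) = 0" by (rule SD_zero) simp
  also have "SD i i (x + 3/2) = (-1)^i * fact i / 2^i" by (rule Suc.IH)
  finally show ?case by (simp add: field_simps)
qed

lemma SD_main: "SD i (Suc i) x = (-1)^i * fact (Suc i) / 2^(Suc i) * (2*x + 3 * of_nat i / 2)"
proof (induction i arbitrary: x)
  case 0
  then show ?case by (simp add: SD_def)
next
  case (Suc i)
  have "SD (Suc i) (Suc (Suc i)) x = x * SD (Suc i) (Suc i) (x+1) - (of_nat (Suc i)/2) * SD i (Suc i) (x + 3/2)"
    by (rule SD_rec)
  also have "SD (Suc i) (Suc i) (x+1) = (-1)^(Suc i) * fact (Suc i) / 2^(Suc i)" by (rule SD_diag)
  also have "SD i (Suc i) (x + 3/2) = (-1)^i * fact (Suc i) / 2^(Suc i) * (2*(x+3/2) + 3 * of_nat i / 2)" by (rule Suc.IH)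
  finally have e: "SD (Suc i) (Suc (Suc i)) x = x * ((-1)^(Suc i) * fact (Suc i) / 2^(Suc i)) - (of_nat (Suc i)/2) * ((-1)^i * fact (Suc i) / 2^(Suc i) * (2*(x+3/2) + 3 * of_nat i / 2))" .
  show ?case unfolding e by (simp add: field_simps fact_Suc)
qed



lemma rhs1:
  fixes i :: nat and \<alpha> \<beta> :: complex
  assumes "\<beta> \<noteq> 0"
    and h4: "\<And>r::nat. r \<le> i \<Longrightarrow> \<beta> / 4 - of_nat i + (of_nat r - 1) / 2 \<notin> \<int>\<^sub>\<le>\<^sub>0"
  shows "(-1) ^ i * (2::complex) powr (\<alpha> + 3 + of_nat i) / (\<beta> * fact (i + 1))
           * (\<Sum>r=0..i. (-1) ^ r * of_nat (i choose r)
               * Gamma (\<beta> / 4 + (of_nat r + 1) / 2)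
               / Gamma (\<beta> / 4 - of_nat i + (of_nat r - 1) / 2))
        = 2 powr \<alpha> * (2*\<beta> - 4 - 2 * of_nat i) / \<beta>"
proof -
  define x where "x = \<beta>/4 - of_nat i - 1/2"
  have "(\<Sum>r=0..i. (-1) ^ r * of_nat (i choose r)
               * Gamma (\<beta> / 4 + (of_nat r + 1) / 2)
               / Gamma (\<beta> / 4 - of_nat i + (of_nat r - 1) / 2)) = SD i (Suc i) x"
    unfolding SD_def
  proof (intro sum.cong refl)
    fix r assume r: "r \<in> {0..i}"
    have z: "\<beta> / 4 - of_nat i + (of_nat r - 1) / 2 = x + of_nat r / 2"
      by (simp add: x_def field_simps)
    have z2: "\<beta> / 4 + (of_nat r + 1) / 2 = (x + of_nat r / 2) + of_nat (Suc i)"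
      by (simp add: x_def field_simps)
    have "pochhammer (x + of_nat r / 2) (Suc i) = Gamma (\<beta> / 4 + (of_nat r + 1) / 2) / Gamma (\<beta> / 4 - of_nat i + (of_nat r - 1) / 2)"
      unfolding z z2 using h4[of r] r z by (intro pochhammer_Gamma) auto
    then show "(-1) ^ r * of_nat (i choose r) * Gamma (\<beta> / 4 + (of_nat r + 1) / 2)
               / Gamma (\<beta> / 4 - of_nat i + (of_nat r - 1) / 2) =
          (-1) ^ r * of_nat (i choose r) * pochhammer (x + of_nat r / 2) (Suc i)"
      by simp
  qed
  also have "\<dots> = (-1)^i * fact (Suc i) / 2^(Suc i) * (2*x + 3 * of_nat i / 2)"
    by (rule SD_main)
  finally have s: "(\<Sum>r=0..i. (-1) ^ r * of_nat (i choose r)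
               * Gamma (\<beta> / 4 + (of_nat r + 1) / 2)
               / Gamma (\<beta> / 4 - of_nat i + (of_nat r - 1) / 2)) = (-1)^i * fact (Suc i) / 2^(Suc i) * (2*x + 3 * of_nat i / 2)" .
  have p: "(2::complex) powr (\<alpha> + 3 + of_nat i) = 2 powr \<alpha> * 2^3 * 2^i"
    by (simp add: powr_add powr_nat')
  have m: "((-1::complex)^i) * (-1)^i = 1"
    by (simp flip: power_add)
  define Y where "Y = 2*x + 3 * of_nat i / 2"
  have f: "(fact (Suc i) :: complex) \<noteq> 0" by (rule fact_nonzero)
  have "(-1) ^ i * (2 powr \<alpha> * 2^3 * 2^i) / (\<beta> * fact (i + 1)) * ((-1)^i * fact (Suc i) / 2^(Suc i) * Y)
     = ((-1::complex)^i * (-1)^i) * (2 powr \<alpha> * 4 * Y / \<beta>)"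
    using assms(1) f unfolding Suc_eq_plus1[symmetric] by (simp add: field_simps del: fact_Suc)
  also have "\<dots> = 2 powr \<alpha> * (2*\<beta> - 4 - 2 * of_nat i) / \<beta>"
    unfolding m Y_def x_def using assms(1) by (simp add: field_simps)
  finally show ?thesis unfolding s p Y_def .
qed

lemma rhs2:
  fixes i :: nat and \<alpha> \<beta> :: complex
  assumes "\<beta> \<noteq> 0"
    and h5: "\<And>r::nat. r \<le> i \<Longrightarrow> \<beta> / 4 + (of_nat r - 1) / 2 \<notin> \<int>\<^sub>\<le>\<^sub>0"
  shows "(2::complex) powr (\<alpha> + 3 - of_nat i) / \<beta>
           * (\<Sum>r=0..i. of_nat (i choose r)
               * Gamma (\<beta> / 4 + (of_nat r + 1) / 2)
               / Gamma (\<beta> / 4 + (of_nat r - 1) / 2))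
        = 2 powr \<alpha> * (2*\<beta> - 4 + 2 * of_nat i) / \<beta>"
proof -
  have "(\<Sum>r=0..i. of_nat (i choose r)
               * Gamma (\<beta> / 4 + (of_nat r + 1) / 2)
               / Gamma (\<beta> / 4 + (of_nat r - 1) / 2))
      = (\<Sum>r=0..i. (\<beta>/4 - 1/2) * of_nat (i choose r) + (1/2) * of_nat (r * (i choose r)))"
  proof (intro sum.cong refl)
    fix r assume r: "r \<in> {0..i}"
    define z where "z = \<beta> / 4 + (of_nat r - 1) / 2"
    have z2: "\<beta> / 4 + (of_nat r + 1) / 2 = z + 1" by (simp add: z_def field_simps)
    have nz: "z \<notin> \<int>\<^sub>\<le>\<^sub>0" using h5[of r] r by (simp add: z_def)
    then have "Gamma z \<noteq> 0" by (simp add: Gamma_eq_zero_iff)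
    then have g: "Gamma (\<beta> / 4 + (of_nat r + 1) / 2) / Gamma z = z"
      unfolding z2 using Gamma_plus1[OF nz] by simp
    have "of_nat (i choose r) * Gamma (\<beta> / 4 + (of_nat r + 1) / 2) / Gamma (\<beta> / 4 + (of_nat r - 1) / 2)
       = of_nat (i choose r) * (Gamma (\<beta> / 4 + (of_nat r + 1) / 2) / Gamma z)"
      unfolding z_def by (simp only: times_divide_eq_right)
    also have "\<dots> = of_nat (i choose r) * z" by (simp only: g)
    also have "\<dots> = (\<beta>/4 - 1/2) * of_nat (i choose r) + (1/2) * of_nat (r * (i choose r))"
      by (simp add: z_def field_simps)
    finally show "of_nat (i choose r) * Gamma (\<beta> / 4 + (of_nat r + 1) / 2) / Gamma (\<beta> / 4 + (of_nat r - 1) / 2)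
       = (\<beta>/4 - 1/2) * of_nat (i choose r) + (1/2) * of_nat (r * (i choose r))" .
  qed
  also have "\<dots> = (\<beta>/4 - 1/2) * of_nat (\<Sum>r\<le>i. i choose r) + (1/2) * of_nat (\<Sum>r\<le>i. r * (i choose r))"
    by (simp add: sum.distrib sum_distrib_left atLeast0AtMost)
  also have "\<dots> = (\<beta>/4 - 1/2) * 2^i + (1/2) * of_nat (i * 2^(i-1))"
    by (simp only: choose_row_sum choose_linear_sum) simp
  also have "(1/2) * of_nat (i * 2^(i-1)) = (of_nat i / 4 :: complex) * 2^i"
    by (cases i) (simp_all add: field_simps)
  finally have s: "(\<Sum>r=0..i. of_nat (i choose r)
               * Gamma (\<beta> / 4 + (of_nat r + 1) / 2)
               / Gamma (\<beta> / 4 + (of_nat r - 1) / 2)) = ((\<beta>/4 - 1/2) + of_nat i / 4) * 2^i"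
    by (simp add: algebra_simps)
  have p: "(2::complex) powr (\<alpha> + 3 - of_nat i) = 2 powr \<alpha> * 2^3 / 2^i"
    by (simp add: powr_add powr_diff powr_nat')
  show ?thesis unfolding s p using assms(1)
    by (simp add: field_simps)
qed



definition KT :: "complex \<Rightarrow> complex \<Rightarrow> complex \<Rightarrow> complex \<Rightarrow> nat \<times> nat \<Rightarrow> complex" where
  "KT \<alpha> \<beta> c e = (\<lambda>(m,n). pochhammer \<alpha> (m+n) * pochhammer c m * pochhammer e n * (\<alpha>/2 + of_nat n)
       / (pochhammer \<beta> (m+n) * (\<alpha>/2)) * ((1/2)^m/fact m) * ((1/2)^n/fact n))"

lemma norm_pochhammer_le: "norm (pochhammer (z::complex) n) \<le> pochhammer (norm z) n"
proof (induction n)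
  case 0 then show ?case by simp
next
  case (Suc n)
  have "norm (pochhammer z (Suc n)) = norm (z + of_nat n) * norm (pochhammer z n)"
    by (simp add: pochhammer_rec' norm_mult)
  also have "\<dots> \<le> (norm z + of_nat n) * pochhammer (norm z) n"
  proof (rule mult_mono)
    show "norm (z + of_nat n) \<le> norm z + of_nat n"
      using norm_triangle_ineq[of z "of_nat n"] by simp
  qed (use Suc in auto)
  also have "\<dots> = pochhammer (norm z) (Suc n)" by (simp add: pochhammer_rec')
  finally show ?case .
qed

lemma pochhammer_nonneg_real: "(x::real) \<ge> 0 \<Longrightarrow> pochhammer x n \<ge> 0"
  by (simp add: pochhammer_prod prod_nonneg)

lemma ratio_bound:
  fixes a b s :: real
  shows "eventually (\<lambda>N::nat. 2*(a+real N)*(s+real N)*(a+2*real N+2) \<le> 3*(real N-b)*(real N+1)*(a+2*real N)) sequentially"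
  by real_asymp

lemma KT_summable:
  assumes "\<alpha> \<noteq> 0" and b: "\<beta> \<notin> \<int>\<^sub>\<le>\<^sub>0"
  shows "(\<lambda>p. norm (KT \<alpha> \<beta> c e p)) summable_on UNIV"
proof -
  define a where "a = norm \<alpha>"
  define s where "s = norm e + norm c"
  have a: "a > 0" using assms by (simp add: a_def)
  have s: "s \<ge> 0" by (simp add: s_def)
  have pb: "pochhammer \<beta> N \<noteq> 0" for N using b by (auto dest: pochhammer_eq_0_imp_nonpos_Int)
  define A where "A N = norm (pochhammer \<alpha> N) / norm (pochhammer \<beta> N) * (1 + 2 * real N / a) * (1/2)^N / fact N" for N
  define M where "M N = A N * pochhammer s N" for N
  have A0: "A N \<ge> 0" for N using a by (simp add: A_def)
  define h where "h = (\<lambda>(N::nat, k::nat). (N - k, k))"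
  have bij: "bij_betw h (Sigma UNIV (\<lambda>N. {..N})) UNIV"
    by (rule bij_betw_byWitness[where f' = "\<lambda>(m,n). (m+n, n)"]) (auto simp: h_def)
  have tb: "norm (KT \<alpha> \<beta> c e (h (N, k))) \<le> A N * (real (N choose k) * pochhammer (norm e) k * pochhammer (norm c) (N - k))"
    if k: "k \<le> N" for N k
  proof -
    have Nk: "N - k + k = N" using k by simp
    have "KT \<alpha> \<beta> c e (h (N, k)) = pochhammer \<alpha> N * pochhammer c (N-k) * pochhammer e k * (\<alpha>/2 + of_nat k)
       / (pochhammer \<beta> N * (\<alpha>/2)) * ((1/2)^(N-k)/fact (N-k)) * ((1/2)^k/fact k)"
      by (simp add: KT_def h_def Nk)
    then have "norm (KT \<alpha> \<beta> c e (h (N, k))) = norm (pochhammer \<alpha> N) / norm (pochhammer \<beta> N)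
        * norm (pochhammer c (N-k)) * norm (pochhammer e k) * (norm (\<alpha>/2 + of_nat k) / norm (\<alpha>/2))
        * ((1/2)^(N-k)/fact (N-k)) * ((1/2)^k/fact k)"
      by (simp add: norm_mult norm_divide norm_power)
    also have "\<dots> \<le> norm (pochhammer \<alpha> N) / norm (pochhammer \<beta> N)
        * pochhammer (norm c) (N-k) * pochhammer (norm e) k * (1 + 2 * real N / a)
        * ((1/2)^(N-k)/fact (N-k)) * ((1/2)^k/fact k)"
    proof -
      have "norm (\<alpha>/2 + of_nat k) \<le> norm (\<alpha>/2) + real k"
        using norm_triangle_ineq[of "\<alpha>/2" "of_nat k"] by simp
      then have "norm (\<alpha>/2 + of_nat k) / norm (\<alpha>/2) \<le> (a/2 + real k) / (a/2)"
        using a by (simp add: a_def divide_right_mono norm_divide)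
      also have "\<dots> \<le> 1 + 2 * real N / a" using a k by (simp add: field_simps)
      finally have q: "norm (\<alpha>/2 + of_nat k) / norm (\<alpha>/2) \<le> 1 + 2 * real N / a" .
      show ?thesis
        by (intro mult_mono mult_nonneg_nonneg norm_pochhammer_le q pochhammer_nonneg_real)
           (use a in auto)
    qed
    also have "\<dots> = A N * (real (N choose k) * pochhammer (norm e) k * pochhammer (norm c) (N - k))"
    proof -
      have p: "(1/2::real)^(N-k) * (1/2)^k = (1/2)^N" by (simp add: power_add[symmetric] Nk)
      have p2: "(2::real)^k * 2^(N-k) = 2^N" using k by (simp add: power_add[symmetric])
      have nb: "norm (pochhammer \<beta> N) \<noteq> 0" using pb by simp
      show ?thesis using a nb
        by (simp add: A_def binomial_fact[OF k] field_simps p2)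
    qed
    finally show ?thesis .
  qed
  define g where "g N = (\<Sum>k\<le>N. norm (KT \<alpha> \<beta> c e (h (N, k))))" for N
  have gM: "g N \<le> M N" for N
  proof -
    have "g N \<le> (\<Sum>k\<le>N. A N * (real (N choose k) * pochhammer (norm e) k * pochhammer (norm c) (N - k)))"
      unfolding g_def by (intro sum_mono tb) auto
    also have "\<dots> = A N * pochhammer s N"
      by (simp add: s_def pochhammer_binomial_sum sum_distrib_left)
    finally show ?thesis by (simp add: M_def)
  qed
  have g0: "g N \<ge> 0" for N by (simp add: g_def sum_nonneg)
  obtain N0 where N0: "\<And>N. N \<ge> N0 \<Longrightarrow> 2*(a+real N)*(s+real N)*(a+2*real N+2) \<le> 3*(real N-norm \<beta>)*(real N+1)*(a+2*real N)"
    using ratio_bound[of a s "norm \<beta>"] by (auto simp: eventually_at_top_linorder)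
  obtain N1 :: nat where N1: "real N1 > norm \<beta>" using reals_Archimedean2 by blast
  have "summable M"
  proof (rule summable_ratio_test[where c = "3/4" and N = "max N0 N1"])
    fix N assume N: "N \<ge> max N0 N1"
    define M0 where "M0 = norm (pochhammer \<alpha> N) / norm (pochhammer \<beta> N) * (1/2)^N / fact N * pochhammer s N"
    have M00: "M0 \<ge> 0" using s by (simp add: M0_def pochhammer_nonneg_real)
    have nb: "norm (\<beta> + of_nat N) \<ge> real N - norm \<beta>"
      using norm_triangle_ineq2[of "of_nat N" "-\<beta>"] by (simp add: add.commute)
    have Nb: "real N - norm \<beta> > 0" using N N1 by linarith
    have na: "norm (\<alpha> + of_nat N) \<le> a + real N"
      using norm_triangle_ineq[of \<alpha> "of_nat N"] by (simp add: a_def)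
    have key: "2 * norm (\<alpha> + of_nat N) * (s + real N) * (a + 2 * real N + 2)
             \<le> 3 * norm (\<beta> + of_nat N) * (real N + 1) * (a + 2 * real N)"
    proof -
      have "2 * norm (\<alpha> + of_nat N) * (s + real N) * (a + 2 * real N + 2)
             \<le> 2*(a+real N)*(s+real N)*(a+2*real N+2)"
        using na s a by (intro mult_right_mono mult_left_mono) auto
      also have "\<dots> \<le> 3*(real N-norm \<beta>)*(real N+1)*(a+2*real N)" using N0[of N] N by auto
      also have "\<dots> \<le> 3 * norm (\<beta> + of_nat N) * (real N + 1) * (a + 2 * real N)"
        using nb Nb a by (intro mult_right_mono mult_left_mono) auto
      finally show ?thesis .
    qed
    have pos: "norm (\<beta> + of_nat N) > 0" using nb Nb by linarith
    have e1: "norm (pochhammer \<alpha> (Suc N)) = norm (\<alpha> + of_nat N) * norm (pochhammer \<alpha> N)"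
      by (simp only: pochhammer_rec' norm_mult)
    have e2: "norm (pochhammer \<beta> (Suc N)) = norm (\<beta> + of_nat N) * norm (pochhammer \<beta> N)"
      by (simp only: pochhammer_rec' norm_mult)
    have e3: "pochhammer s (Suc N) = (s + real N) * pochhammer s N"
      by (simp only: pochhammer_rec')
    have e4: "(fact (Suc N) :: real) = (real N + 1) * fact N" by simp
    have nbN: "norm (pochhammer \<beta> N) > 0" using pb by simp
    have MS: "M (Suc N) = M0 * (norm (\<alpha> + of_nat N) * (s + real N) * (a + 2 * real N + 2)
                / (2 * norm (\<beta> + of_nat N) * (real N + 1) * a))"
      unfolding M_def A_def M0_def e1 e2 e3 e4 using a pos nbN
      by (simp add: field_simps)
    have MN: "M N = M0 * ((a + 2 * real N) / a)"
      using a by (simp add: M_def A_def M0_def field_simps)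
    have "(norm (\<alpha> + of_nat N) * (s + real N) * (a + 2 * real N + 2)
                / (2 * norm (\<beta> + of_nat N) * (real N + 1) * a)) \<le> 3/4 * ((a + 2 * real N) / a)"
    proof -
      have D: "2 * norm (\<beta> + of_nat N) * (real N + 1) * a > 0" using pos a by simp
      have r: "3/4 * ((a + 2 * real N) / a) * (2 * norm (\<beta> + of_nat N) * (real N + 1) * a)
          = 3/2 * (norm (\<beta> + of_nat N) * (real N + 1) * (a + 2 * real N))"
        using a by (simp add: field_simps)
      have "norm (\<alpha> + of_nat N) * (s + real N) * (a + 2 * real N + 2)
          \<le> 3/4 * ((a + 2 * real N) / a) * (2 * norm (\<beta> + of_nat N) * (real N + 1) * a)"
        unfolding r using key by (simp add: algebra_simps)
      then show ?thesis by (subst pos_divide_le_eq[OF D])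
    qed
    then have "M (Suc N) \<le> 3/4 * M N"
      unfolding MS MN using M00 by (metis mult.left_commute mult_left_mono)
    moreover have "M N \<ge> 0" "M (Suc N) \<ge> 0"
      using A0 s by (auto simp: M_def pochhammer_nonneg_real)
    ultimately show "norm (M (Suc N)) \<le> 3/4 * norm (M N)" by simp
  qed simp
  then have "summable g"
    by (rule summable_comparison_test[rotated]) (use g0 gM in auto)
  then have gs: "g summable_on UNIV"
    using g0 by (intro norm_summable_imp_summable_on) simp
  have "(\<lambda>p. norm (KT \<alpha> \<beta> c e (h p))) summable_on (Sigma UNIV (\<lambda>N. {..N}))"
    by (rule summable_on_SigmaI[where g = g]) (auto simp: g_def intro: has_sum_finite gs)
  then have "(\<lambda>p. norm (KT \<alpha> \<beta> c e p)) summable_on UNIV"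
    using summable_on_reindex_bij_betw[OF bij, of "\<lambda>p. norm (KT \<alpha> \<beta> c e p)"] by simp
  then show ?thesis by simp
qed



lemma half_powr: "(1/2::complex) powr (-a) = 2 powr a"
proof -
  have "(1/2::complex) powr a * 2 powr a = (1/2 * 2) powr a"
    by (rule powr_times_real[symmetric]) auto
  then have "(1/2::complex) powr a * 2 powr a = 1" by simp
  then show ?thesis by (simp add: powr_minus field_simps)
qed

lemma binom_half: "(\<lambda>n. pochhammer a n / fact n * (1/2::complex)^n) sums 2 powr a"
proof -
  have "(\<lambda>n. ((-a) gchoose n) * (-1/2::complex)^n) sums (1 + (-1/2)) powr (-a)"
    by (rule gen_binomial_complex) simp
  moreover have "((-a) gchoose n) * (-1/2::complex)^n = pochhammer a n / fact n * (1/2)^n" for n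
  proof -
    have "(-1/2::complex)^n = (-1)^n * (1/2)^n" by (simp flip: power_mult_distrib)
    moreover have "((-1::complex)^n) * (-1)^n = 1" by (simp flip: power_add)
    ultimately show ?thesis
      by (simp add: gbinomial_pochhammer)
  qed
  ultimately show ?thesis using half_powr[of a] by simp
qed

lemma binom_half2: "(\<lambda>n. of_nat n * (pochhammer a n / fact n * (1/2::complex)^n)) sums (a * 2 powr a)"
proof -
  have S1: "(\<lambda>n. a/2 * (pochhammer (a+1) n / fact n * (1/2::complex)^n)) sums (a/2 * 2 powr (a+1))"
    by (intro sums_mult binom_half)
  have eq: "(\<lambda>n. a/2 * (pochhammer (a+1) n / fact n * (1/2::complex)^n))
     = (\<lambda>n. of_nat (Suc n) * (pochhammer a (Suc n) / fact (Suc n) * (1/2::complex)^(Suc n)))"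
    by (rule ext) (simp add: pochhammer_rec field_simps del: of_nat_Suc)
  have v: "a/2 * 2 powr (a+1) = a * 2 powr a"
    by (simp add: powr_add)
  have "(\<lambda>n. of_nat (Suc n) * (pochhammer a (Suc n) / fact (Suc n) * (1/2::complex)^(Suc n))) sums (a * 2 powr a)"
    using S1 unfolding eq v .
  then show ?thesis
    using sums_Suc_iff[where f = "\<lambda>n. of_nat n * (pochhammer a n / fact n * (1/2::complex)^n)"] by simp
qed

lemma V2:
  fixes c e \<beta> :: complex
  assumes "c + e = \<beta>"
  shows "\<beta> * (\<Sum>k\<le>N. of_nat k * (of_nat (N choose k) * pochhammer e k * pochhammer c (N - k)))
       = e * of_nat N * pochhammer \<beta> N"
proof (cases N)
  case 0 then show ?thesis by simp
next
  case (Suc M)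
  have "(\<Sum>k\<le>Suc M. of_nat k * (of_nat (Suc M choose k) * pochhammer e k * pochhammer c (Suc M - k)))
      = (\<Sum>j\<le>M. of_nat (Suc j) * (of_nat (Suc M choose Suc j) * pochhammer e (Suc j) * pochhammer c (M - j)))"
    by (subst sum.atMost_Suc_shift) simp
  also have "\<dots> = (\<Sum>j\<le>M. of_nat (Suc M) * e * (of_nat (M choose j) * pochhammer (e+1) j * pochhammer c (M - j)))"
  proof (intro sum.cong refl)
    fix j
    have "Suc j * (Suc M choose Suc j) = Suc M * (M choose j)"
      using Suc_times_binomial_eq[of M j] by (simp add: mult.commute)
    then have "(of_nat (Suc j) :: complex) * of_nat (Suc M choose Suc j) = of_nat (Suc M) * of_nat (M choose j)"
      by (metis of_nat_mult)
    then show "of_nat (Suc j) * (of_nat (Suc M choose Suc j) * pochhammer e (Suc j) * pochhammer c (M - j))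
       = of_nat (Suc M) * e * (of_nat (M choose j) * pochhammer (e+1) j * pochhammer c (M - j))"
    proof -
      assume eq: "(of_nat (Suc j) :: complex) * of_nat (Suc M choose Suc j) = of_nat (Suc M) * of_nat (M choose j)"
      have "of_nat (Suc j) * (of_nat (Suc M choose Suc j) * pochhammer e (Suc j) * pochhammer c (M - j))
          = ((of_nat (Suc j) :: complex) * of_nat (Suc M choose Suc j)) * (e * (pochhammer (e+1) j * pochhammer c (M - j)))"
        by (simp only: pochhammer_rec mult_ac)
      also have "\<dots> = (of_nat (Suc M) * of_nat (M choose j)) * (e * (pochhammer (e+1) j * pochhammer c (M - j)))"
        by (simp only: eq)
      also have "\<dots> = of_nat (Suc M) * e * (of_nat (M choose j) * pochhammer (e+1) j * pochhammer c (M - j))"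
        by (simp only: mult_ac)
      finally show ?thesis .
    qed
  qed
  also have "\<dots> = of_nat (Suc M) * e * pochhammer ((e+1) + c) M"
    by (simp add: pochhammer_binomial_sum sum_distrib_left mult.assoc)
  finally have s: "(\<Sum>k\<le>Suc M. of_nat k * (of_nat (Suc M choose k) * pochhammer e k * pochhammer c (Suc M - k)))
      = of_nat (Suc M) * e * pochhammer (\<beta> + 1) M"
    using assms by (simp add: algebra_simps)
  show ?thesis unfolding Suc s by (simp add: pochhammer_rec algebra_simps)
qed

lemma inner:
  fixes c e \<alpha> \<beta> :: complex
  assumes ce: "c + e = \<beta>" and a: "\<alpha> \<noteq> 0" and b: "\<beta> \<notin> \<int>\<^sub>\<le>\<^sub>0"
  shows "(\<Sum>k\<le>N. KT \<alpha> \<beta> c e (N - k, k))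
     = pochhammer \<alpha> N / fact N * (1/2)^N * (1 + 2 * of_nat N * e / (\<alpha> * \<beta>))"
proof -
  have pb: "pochhammer \<beta> N \<noteq> 0" using b by (auto dest: pochhammer_eq_0_imp_nonpos_Int)
  have b0: "\<beta> \<noteq> 0" using b by auto
  define K where "K = pochhammer \<alpha> N / (pochhammer \<beta> N * fact N) * (1/2::complex)^N"
  have "KT \<alpha> \<beta> c e (N - k, k) = K * (of_nat (N choose k) * pochhammer e k * pochhammer c (N - k)
         + (2/\<alpha>) * (of_nat k * (of_nat (N choose k) * pochhammer e k * pochhammer c (N - k))))"
    if k: "k \<le> N" for k
  proof -
    have Nk: "N - k + k = N" using k by simp
    have p: "(1/2::complex)^(N-k) * (1/2)^k = (1/2)^N" by (simp add: power_add[symmetric] Nk)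
    have p2: "(2::complex)^(N-k) * 2^k = 2^N" "(2::complex)^k * 2^(N-k) = 2^N"
      using k by (simp_all add: power_add[symmetric])
    have "KT \<alpha> \<beta> c e (N - k, k) = pochhammer \<alpha> N * pochhammer c (N-k) * pochhammer e k * (\<alpha>/2 + of_nat k)
       / (pochhammer \<beta> N * (\<alpha>/2)) * ((1/2)^(N-k) / fact (N-k)) * ((1/2)^k / fact k)"
      by (simp add: KT_def Nk)
    also have "\<dots> = K * (of_nat (N choose k) * pochhammer e k * pochhammer c (N - k)
         + (2/\<alpha>) * (of_nat k * (of_nat (N choose k) * pochhammer e k * pochhammer c (N - k))))"
      unfolding K_def binomial_fact[OF k] using a pb by (simp add: field_simps p2)
    finally show ?thesis .
  qed
  then have "(\<Sum>k\<le>N. KT \<alpha> \<beta> c e (N - k, k)) = (\<Sum>k\<le>N. K * (of_nat (N choose k) * pochhammer e k * pochhammer c (N - k)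
         + (2/\<alpha>) * (of_nat k * (of_nat (N choose k) * pochhammer e k * pochhammer c (N - k)))))"
    by (intro sum.cong) auto
  also have "\<dots> = K * ((\<Sum>k\<le>N. of_nat (N choose k) * pochhammer e k * pochhammer c (N - k))
      + (2/\<alpha>) * (\<Sum>k\<le>N. of_nat k * (of_nat (N choose k) * pochhammer e k * pochhammer c (N - k))))"
    by (simp only: sum.distrib sum_distrib_left distrib_left)
  also have "(\<Sum>k\<le>N. of_nat (N choose k) * pochhammer e k * pochhammer c (N - k)) = pochhammer \<beta> N"
    using ce by (simp add: pochhammer_binomial_sum[symmetric] add.commute)
  also have "(\<Sum>k\<le>N. of_nat k * (of_nat (N choose k) * pochhammer e k * pochhammer c (N - k)))
      = e * of_nat N * pochhammer \<beta> N / \<beta>"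
    using V2[OF ce, of N] b0 by (simp add: field_simps)
  finally have F: "(\<Sum>k\<le>N. KT \<alpha> \<beta> c e (N - k, k)) = K * (pochhammer \<beta> N + 2 / \<alpha> * (e * of_nat N * pochhammer \<beta> N / \<beta>))" .
  have K1: "K * pochhammer \<beta> N = pochhammer \<alpha> N / fact N * (1/2)^N"
    unfolding K_def using pb by simp
  have "K * (pochhammer \<beta> N + 2 / \<alpha> * (e * of_nat N * pochhammer \<beta> N / \<beta>))
      = (K * pochhammer \<beta> N) * (1 + 2 * of_nat N * e / (\<alpha> * \<beta>))"
    using a b0 by (simp add: field_simps)
  then show ?thesis unfolding F K1 .
qed



lemma cancel_aux: "(w::complex) \<noteq> 0 \<Longrightarrow> a * (w * y) / (b * w) = a * y / b"
  by (cases "b = 0") (simp_all add: field_simps)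

lemma KdF_KT:
  assumes a: "\<alpha> / 2 \<notin> \<int>\<^sub>\<le>\<^sub>0"
  shows "KdF [\<alpha>] [c] [e, \<alpha>/2 + 1] [\<beta>] [] [\<alpha>/2] (1/2) (1/2) = infsum (KT \<alpha> \<beta> c e) UNIV"
  unfolding KdF_def
proof (intro infsum_cong)
  fix p :: "nat \<times> nat"
  obtain m n where p: "p = (m, n)" by (cases p)
  define z where "z = \<alpha>/2"
  have z0: "z \<noteq> 0" using a by (auto simp: z_def)
  have pz: "pochhammer z n \<noteq> 0" using a by (auto simp: z_def dest: pochhammer_eq_0_imp_nonpos_Int)
  have "z * pochhammer (z+1) n = (z + of_nat n) * pochhammer z n"
    by (metis pochhammer_rec pochhammer_rec')
  then have P: "pochhammer (z+1) n = pochhammer z n * ((z + of_nat n) / z)"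
    using z0 by (simp add: field_simps)
  have "(case p of (m, n) \<Rightarrow>
          prod_list (map (\<lambda>p. pochhammer p (m + n)) [\<alpha>]) * prod_list (map (\<lambda>p. pochhammer p m) [c]) *
          prod_list (map (\<lambda>p. pochhammer p n) [e, \<alpha> / 2 + 1]) /
          (prod_list (map (\<lambda>p. pochhammer p (m + n)) [\<beta>]) * prod_list (map (\<lambda>p. pochhammer p m) []) *
           prod_list (map (\<lambda>p. pochhammer p n) [\<alpha> / 2])) *
          ((1 / 2) ^ m / fact m) * ((1 / 2) ^ n / fact n))
      = (pochhammer \<alpha> (m+n) * pochhammer c m * pochhammer e n) * (pochhammer z n * ((z + of_nat n) / z))
          / (pochhammer \<beta> (m+n) * pochhammer z n) * ((1 / 2) ^ m / fact m) * ((1 / 2) ^ n / fact n)"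
    unfolding p z_def[symmetric] P[symmetric] by (simp add: mult.assoc)
  also have "\<dots> = (pochhammer \<alpha> (m+n) * pochhammer c m * pochhammer e n) * ((z + of_nat n) / z)
          / (pochhammer \<beta> (m+n)) * ((1 / 2) ^ m / fact m) * ((1 / 2) ^ n / fact n)"
    by (simp only: cancel_aux[OF pz])
  also have "\<dots> = KT \<alpha> \<beta> c e p"
    using z0 unfolding p KT_def z_def by (simp add: field_simps)
  finally show "(case p of (m, n) \<Rightarrow>
          prod_list (map (\<lambda>p. pochhammer p (m + n)) [\<alpha>]) * prod_list (map (\<lambda>p. pochhammer p m) [c]) *
          prod_list (map (\<lambda>p. pochhammer p n) [e, \<alpha> / 2 + 1]) /
          (prod_list (map (\<lambda>p. pochhammer p (m + n)) [\<beta>]) * prod_list (map (\<lambda>p. pochhammer p m) []) *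
           prod_list (map (\<lambda>p. pochhammer p n) [\<alpha> / 2])) *
          ((1 / 2) ^ m / fact m) * ((1 / 2) ^ n / fact n)) = KT \<alpha> \<beta> c e p" .
qed

lemma LHS:
  fixes \<alpha> \<beta> c e :: complex
  assumes b: "\<beta> \<notin> \<int>\<^sub>\<le>\<^sub>0" and a: "\<alpha> / 2 \<notin> \<int>\<^sub>\<le>\<^sub>0" and ce: "c + e = \<beta>"
  shows "KdF [\<alpha>] [c] [e, \<alpha>/2 + 1] [\<beta>] [] [\<alpha>/2] (1/2) (1/2) = 2 powr \<alpha> * (\<beta> + 2 * e) / \<beta>"
proof -
  have a0: "\<alpha> \<noteq> 0" using a by auto
  have b0: "\<beta> \<noteq> 0" using b by auto
  have "(\<lambda>p. norm (KT \<alpha> \<beta> c e p)) summable_on UNIV" by (rule KT_summable[OF a0 b])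
  then have s: "KT \<alpha> \<beta> c e summable_on UNIV" by (rule abs_summable_summable)
  define h where "h = (\<lambda>(N::nat, k::nat). (N - k, k))"
  have bij: "bij_betw h (Sigma UNIV (\<lambda>N. {..N})) UNIV"
    by (rule bij_betw_byWitness[where f' = "\<lambda>(m,n). (m+n, n)"]) (auto simp: h_def)
  have s2: "(\<lambda>p. KT \<alpha> \<beta> c e (h p)) summable_on (Sigma UNIV (\<lambda>N. {..N}))"
    by (subst summable_on_reindex_bij_betw[OF bij]) (rule s)
  have eq: "infsum (\<lambda>p. KT \<alpha> \<beta> c e (h p)) (Sigma UNIV (\<lambda>N. {..N})) = infsum (KT \<alpha> \<beta> c e) UNIV"
    by (rule infsum_reindex_bij_betw[OF bij])
  define G where "G N = pochhammer \<alpha> N / fact N * (1/2)^N * (1 + 2 * of_nat N * e / (\<alpha> * \<beta>))" for N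
  have "(G has_sum infsum (\<lambda>p. KT \<alpha> \<beta> c e (h p)) (Sigma UNIV (\<lambda>N. {..N}))) UNIV"
  proof (rule has_sum_Sigma')
    show "((\<lambda>p. KT \<alpha> \<beta> c e (h p)) has_sum infsum (\<lambda>p. KT \<alpha> \<beta> c e (h p)) (Sigma UNIV (\<lambda>N. {..N}))) (Sigma UNIV (\<lambda>N. {..N}))"
      using s2 by simp
    fix N :: nat
    have "(\<Sum>k\<le>N. KT \<alpha> \<beta> c e (h (N, k))) = G N"
      unfolding G_def h_def using inner[OF ce a0 b, of N] by simp
    then show "((\<lambda>k. KT \<alpha> \<beta> c e (h (N, k))) has_sum G N) {..N}"
      using has_sum_finite[of "{..N}" "\<lambda>k. KT \<alpha> \<beta> c e (h (N, k))"] by simp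
  qed
  then have "G sums infsum (KT \<alpha> \<beta> c e) UNIV" unfolding eq by (rule has_sum_imp_sums)
  moreover have "G sums (2 powr \<alpha> + (2 * e / (\<alpha> * \<beta>)) * (\<alpha> * 2 powr \<alpha>))"
  proof -
    have "(\<lambda>N. pochhammer \<alpha> N / fact N * (1/2::complex)^N + (2 * e / (\<alpha> * \<beta>)) * (of_nat N * (pochhammer \<alpha> N / fact N * (1/2::complex)^N)))
        sums (2 powr \<alpha> + (2 * e / (\<alpha> * \<beta>)) * (\<alpha> * 2 powr \<alpha>))"
      by (intro sums_add sums_mult binom_half binom_half2)
    moreover have "(\<lambda>N. pochhammer \<alpha> N / fact N * (1/2::complex)^N + (2 * e / (\<alpha> * \<beta>)) * (of_nat N * (pochhammer \<alpha> N / fact N * (1/2::complex)^N))) = G"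
      by (rule ext) (simp add: G_def field_simps)
    ultimately show ?thesis by simp
  qed
  ultimately have "infsum (KT \<alpha> \<beta> c e) UNIV = 2 powr \<alpha> + (2 * e / (\<alpha> * \<beta>)) * (\<alpha> * 2 powr \<alpha>)"
    by (rule sums_unique2)
  also have "\<dots> = 2 powr \<alpha> * (\<beta> + 2 * e) / \<beta>"
    using a0 b0 by (simp add: field_simps)
  finally show ?thesis using KdF_KT[OF a] by simp
qed


theorem theorem4:
  fixes i :: nat and \<alpha> \<beta> :: complex
  assumes "\<beta> \<notin> \<int>\<^sub>\<le>\<^sub>0" and "\<alpha> / 2 \<notin> \<int>\<^sub>\<le>\<^sub>0"
    and "\<And>r::nat. r \<le> i \<Longrightarrow> \<beta> / 4 + (of_nat r + 1) / 2 \<notin> \<int>\<^sub>\<le>\<^sub>0"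
    and "\<And>r::nat. r \<le> i \<Longrightarrow> \<beta> / 4 - of_nat i + (of_nat r - 1) / 2 \<notin> \<int>\<^sub>\<le>\<^sub>0"
    and "\<And>r::nat. r \<le> i \<Longrightarrow> \<beta> / 4 + (of_nat r - 1) / 2 \<notin> \<int>\<^sub>\<le>\<^sub>0"
  shows "(KdF [\<alpha>] [\<beta>/2 + 2 + of_nat i] [\<beta>/2 - 2 - of_nat i, \<alpha>/2 + 1]
             [\<beta>] [] [\<alpha>/2] (1/2) (1/2)
         = (-1) ^ i * (2::complex) powr (\<alpha> + 3 + of_nat i) / (\<beta> * fact (i + 1))
           * (\<Sum>r=0..i. (-1) ^ r * of_nat (i choose r)
               * Gamma (\<beta> / 4 + (of_nat r + 1) / 2)
               / Gamma (\<beta> / 4 - of_nat i + (of_nat r - 1) / 2))) \<and>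
        (KdF [\<alpha>] [\<beta>/2 + 2 - of_nat i] [\<beta>/2 - 2 + of_nat i, \<alpha>/2 + 1]
             [\<beta>] [] [\<alpha>/2] (1/2) (1/2)
         = (2::complex) powr (\<alpha> + 3 - of_nat i) / \<beta>
           * (\<Sum>r=0..i. of_nat (i choose r)
               * Gamma (\<beta> / 4 + (of_nat r + 1) / 2)
               / Gamma (\<beta> / 4 + (of_nat r - 1) / 2)))"
proof
  have b0: "\<beta> \<noteq> 0" using assms(1) by auto
  have "KdF [\<alpha>] [\<beta>/2 + 2 + of_nat i] [\<beta>/2 - 2 - of_nat i, \<alpha>/2 + 1]
             [\<beta>] [] [\<alpha>/2] (1/2) (1/2) = 2 powr \<alpha> * (\<beta> + 2 * (\<beta>/2 - 2 - of_nat i)) / \<beta>"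
    by (rule LHS[OF assms(1,2)]) simp
  also have "\<beta> + 2 * (\<beta>/2 - 2 - of_nat i) = 2*\<beta> - 4 - 2 * of_nat i" by simp
  also have "2 powr \<alpha> * (2*\<beta> - 4 - 2 * of_nat i) / \<beta>
      = (-1) ^ i * (2::complex) powr (\<alpha> + 3 + of_nat i) / (\<beta> * fact (i + 1))
           * (\<Sum>r=0..i. (-1) ^ r * of_nat (i choose r)
               * Gamma (\<beta> / 4 + (of_nat r + 1) / 2)
               / Gamma (\<beta> / 4 - of_nat i + (of_nat r - 1) / 2))"
    by (rule rhs1[OF b0 assms(4), symmetric])
  finally show "KdF [\<alpha>] [\<beta>/2 + 2 + of_nat i] [\<beta>/2 - 2 - of_nat i, \<alpha>/2 + 1]
             [\<beta>] [] [\<alpha>/2] (1/2) (1/2)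
         = (-1) ^ i * (2::complex) powr (\<alpha> + 3 + of_nat i) / (\<beta> * fact (i + 1))
           * (\<Sum>r=0..i. (-1) ^ r * of_nat (i choose r)
               * Gamma (\<beta> / 4 + (of_nat r + 1) / 2)
               / Gamma (\<beta> / 4 - of_nat i + (of_nat r - 1) / 2))" .
next
  have b0: "\<beta> \<noteq> 0" using assms(1) by auto
  have "KdF [\<alpha>] [\<beta>/2 + 2 - of_nat i] [\<beta>/2 - 2 + of_nat i, \<alpha>/2 + 1]
             [\<beta>] [] [\<alpha>/2] (1/2) (1/2) = 2 powr \<alpha> * (\<beta> + 2 * (\<beta>/2 - 2 + of_nat i)) / \<beta>"
    by (rule LHS[OF assms(1,2)]) simp
  also have "\<beta> + 2 * (\<beta>/2 - 2 + of_nat i) = 2*\<beta> - 4 + 2 * of_nat i" by simp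
  also have "2 powr \<alpha> * (2*\<beta> - 4 + 2 * of_nat i) / \<beta>
      = (2::complex) powr (\<alpha> + 3 - of_nat i) / \<beta>
           * (\<Sum>r=0..i. of_nat (i choose r)
               * Gamma (\<beta> / 4 + (of_nat r + 1) / 2)
               / Gamma (\<beta> / 4 + (of_nat r - 1) / 2))"
    by (rule rhs2[OF b0 assms(5), symmetric])
  finally show "KdF [\<alpha>] [\<beta>/2 + 2 - of_nat i] [\<beta>/2 - 2 + of_nat i, \<alpha>/2 + 1]
             [\<beta>] [] [\<alpha>/2] (1/2) (1/2)
         = (2::complex) powr (\<alpha> + 3 - of_nat i) / \<beta>
           * (\<Sum>r=0..i. of_nat (i choose r)
               * Gamma (\<beta> / 4 + (of_nat r + 1) / 2)
               / Gamma (\<beta> / 4 + (of_nat r - 1) / 2))" .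
qed

end
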